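(* Let $b_1,b_2,b_3$ be functions on an open interval $I$ and let $\gamma: I\to\mathbb{E}^4$ be a regular curve with a Bishop frame $\mathbb{B}$ whose coefficient matrix is $X_{\mathbb{B}}=\begin{pmatrix}0&b_1&b_2&b_3\\-b_1&0&0&0\\-b_2&0&0&0\\-b_3&0&0&0\end{pmatrix}$. Suppose the vector ${}^t(b_1,b_2,b_3)$ is nowhere parallel to ${}^t(0,1,0)$ (equivalently, $(b_1,b_3)$ is nowhere zero). Then $\gamma$ admits a frame $\mathbb{C}$ whose coefficient matrix is $X_{\mathbb{C}}=\begin{pmatrix}0&c_1&c_2&0\\-c_1&0&0&c_3\\-c_2&0&0&0\\0&-c_3&0&0\end{pmatrix}$ with $c_1=\pm\sqrt{b_1^2+b_3^2}$, $c_2=b_2$, $c_3=\pm\dfrac{b_3'b_1-b_3b_1'}{b_1^2+b_3^2}$ (for suitable choices of signs), and the transformation $G=\mathbb{C}\mathbb{B}^{-1}$ is of the form $\begin{pmatrix}1&0&0&0\\0&\pm\cos\theta&0&\pm\sin\theta\\0&0&1&0\\0&-\sin\theta&0&\cos\theta\end{pmatrix}$ for some function $\theta$ with $\theta'=\pm\dfrac{b_3'b_1-b_3b_1'}{b_1^2+b_3^2}$.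
   Context: A regular curve $\gamma: I\to\mathbb{E}^4$ is considered with arc-length parametrization; $\mathbb{T}=\gamma'$ is its unit tangent vector. A frame on $\gamma$ is an ordered orthonormal frame $(\mathbb{T},\mathbb{Z}_1,\mathbb{Z}_2,\mathbb{Z}_3)$ of smooth vector fields along $\gamma$ whose first vector is $\mathbb{T}$; it is identified with the smooth map $\mathbb{Z}: I\to O(4)$ whose rows are these vectors. Its coefficient matrix is the $\mathfrak{o}(4)$-valued function $X$ with $\mathbb{Z}'=X\mathbb{Z}$. A Bishop frame is a frame whose coefficient matrix has the form $\begin{pmatrix}0&b_1&b_2&b_3\\-b_1&0&0&0\\-b_2&0&0&0\\-b_3&0&0&0\end{pmatrix}$. *)

theory Defs
  imports "HOL-Analysis.Analysis"
begin

definition vderiv :: "(real \<Rightarrow> 'a::real_normed_vector) \<Rightarrow> real \<Rightarrow> 'a" where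
  "vderiv f = (\<lambda>t. vector_derivative f (at t))"

definition smooth_on :: "real set \<Rightarrow> (real \<Rightarrow> 'a::real_normed_vector) \<Rightarrow> bool" where
  "smooth_on I f \<longleftrightarrow> (\<forall>k. \<forall>t\<in>I. ((vderiv ^^ k) f) differentiable (at t))"

definition arclength_curve :: "real set \<Rightarrow> (real \<Rightarrow> real^4) \<Rightarrow> bool" where
  "arclength_curve I \<gamma> \<longleftrightarrow> smooth_on I \<gamma> \<and> (\<forall>t\<in>I. norm (vector_derivative \<gamma> (at t)) = 1)"

text \<open>A frame on the curve: smooth map into O(4) whose rows are (T, Z1, Z2, Z3), first row T.\<close>
definition frame_on :: "real set \<Rightarrow> (real \<Rightarrow> real^4) \<Rightarrow> (real \<Rightarrow> real^4^4) \<Rightarrow> bool" where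
  "frame_on I \<gamma> Z \<longleftrightarrow> smooth_on I Z \<and>
     (\<forall>t\<in>I. orthogonal_matrix (Z t) \<and> Z t $ 1 = vector_derivative \<gamma> (at t))"

definition coeff_matrix :: "real set \<Rightarrow> (real \<Rightarrow> real^4^4) \<Rightarrow> (real \<Rightarrow> real^4^4) \<Rightarrow> bool" where
  "coeff_matrix I Z X \<longleftrightarrow> (\<forall>t\<in>I. (Z has_vector_derivative (X t ** Z t)) (at t))"

definition bishop_mat :: "real \<Rightarrow> real \<Rightarrow> real \<Rightarrow> real^4^4" where
  "bishop_mat b1 b2 b3 = vector [vector [0, b1, b2, b3], vector [-b1, 0, 0, 0],
                                 vector [-b2, 0, 0, 0], vector [-b3, 0, 0, 0]]"

definition C_mat :: "real \<Rightarrow> real \<Rightarrow> real \<Rightarrow> real^4^4" where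
  "C_mat c1 c2 c3 = vector [vector [0, c1, c2, 0], vector [-c1, 0, 0, c3],
                            vector [-c2, 0, 0, 0], vector [0, -c3, 0, 0]]"

definition G_mat :: "real \<Rightarrow> real \<Rightarrow> real \<Rightarrow> real^4^4" where
  "G_mat e1 e2 \<theta> = vector [vector [1, 0, 0, 0], vector [0, e1 * cos \<theta>, 0, e2 * sin \<theta>],
                             vector [0, 0, 1, 0], vector [0, - sin \<theta>, 0, cos \<theta>]]"

end

theory Submission
  imports Defs
begin

fun dk :: "real set \<Rightarrow> nat \<Rightarrow> (real \<Rightarrow> 'a::real_normed_vector) \<Rightarrow> bool" where
  "dk I 0 f = (\<forall>t\<in>I. f differentiable (at t))"
| "dk I (Suc n) f = ((\<forall>t\<in>I. f differentiable (at t)) \<and> dk I n (vderiv f))"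

lemma dk_iff: "dk I n f \<longleftrightarrow> (\<forall>k\<le>n. \<forall>t\<in>I. ((vderiv ^^ k) f) differentiable (at t))"
proof (induction n arbitrary: f)
  case 0 then show ?case by simp
next
  case (Suc n)
  have "(\<forall>k\<le>Suc n. \<forall>t\<in>I. ((vderiv ^^ k) f) differentiable (at t)) \<longleftrightarrow>
        (\<forall>t\<in>I. f differentiable (at t)) \<and> (\<forall>k\<le>n. \<forall>t\<in>I. ((vderiv ^^ Suc k) f) differentiable (at t))"
    by (metis (no_types, lifting) Suc_le_mono funpow_0 not0_implies_Suc zero_le)
  also have "\<dots> \<longleftrightarrow> (\<forall>t\<in>I. f differentiable (at t)) \<and> (\<forall>k\<le>n. \<forall>t\<in>I. ((vderiv ^^ k) (vderiv f)) differentiable (at t))"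
    by (simp only: funpow_Suc_right o_apply)
  finally show ?case using Suc by simp
qed

lemma smooth_dk: "smooth_on I f \<longleftrightarrow> (\<forall>n. dk I n f)"
  unfolding smooth_on_def dk_iff by blast

lemma dk_mono: "dk I (Suc n) f \<Longrightarrow> dk I n f"
  by (auto simp: dk_iff)

lemma dk_diff: "dk I n f \<Longrightarrow> t \<in> I \<Longrightarrow> f differentiable (at t)"
  by (cases n) auto

lemma dk_vderiv: "dk I (Suc n) f \<Longrightarrow> dk I n (vderiv f)"
  by simp

lemma smooth_vderiv: "smooth_on I f \<Longrightarrow> smooth_on I (vderiv f)"
  by (auto simp: smooth_dk) (metis dk.simps(2))

lemma vderiv_local:
  assumes "open I" "\<And>t. t \<in> I \<Longrightarrow> f t = g t" "t \<in> I"
  shows "vderiv f t = vderiv g t"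
proof -
  have "\<And>x. (f has_vector_derivative x) (at t) \<longleftrightarrow> (g has_vector_derivative x) (at t)"
    using has_vector_derivative_transform_within_open[OF _ assms(1) assms(3)] assms(2) by metis
  then show ?thesis unfolding vderiv_def vector_derivative_def by simp
qed

lemma diff_local:
  assumes "open I" "\<And>t. t \<in> I \<Longrightarrow> f t = g t" "t \<in> I" "f differentiable (at t)"
  shows "g differentiable (at t)"
  using assms unfolding differentiable_def
  by (metis has_derivative_transform_within_open)

lemma dk_local:
  assumes "open I" "dk I n f" "\<And>t. t \<in> I \<Longrightarrow> f t = g t"
  shows "dk I n g"
  using assms(2,3)
proof (induction n arbitrary: f g)
  case 0 then show ?case using diff_local[OF assms(1)] by (metis dk.simps(1))
next
  case (Suc n)
  have "\<And>t. t \<in> I \<Longrightarrow> vderiv f t = vderiv g t" using vderiv_local[OF assms(1)] Suc.prems by metis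
  then show ?case using Suc diff_local[OF assms(1)] by (metis dk.simps(2))
qed

lemma smooth_local:
  assumes "open I" "smooth_on I f" "\<And>t. t \<in> I \<Longrightarrow> f t = g t"
  shows "smooth_on I g"
  using assms dk_local smooth_dk by metis

lemma vderiv_at: "f differentiable (at t) \<Longrightarrow> (f has_vector_derivative vderiv f t) (at t)"
  unfolding vderiv_def by (simp add: vector_derivative_works)

lemma dk_const: "dk I n (\<lambda>_. c)"
proof (induction n arbitrary: c)
  case 0 then show ?case by simp
next
  case (Suc n)
  have "vderiv (\<lambda>_. c) = (\<lambda>_. 0)" unfolding vderiv_def by (simp add: vector_derivative_const_at)
  then show ?case using Suc by simp
qed

lemma vderiv_eq: "(f has_vector_derivative D) (at t) \<Longrightarrow> vderiv f t = D"
  unfolding vderiv_def by (rule vector_derivative_at)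

lemma dk_add:
  assumes "open I"
  shows "dk I n f \<Longrightarrow> dk I n g \<Longrightarrow> dk I n (\<lambda>t. f t + g t)"
proof (induction n arbitrary: f g)
  case 0 then show ?case by auto
next
  case (Suc n)
  have d: "\<forall>t\<in>I. (\<lambda>t. f t + g t) differentiable (at t)" using Suc.prems by auto
  have v: "vderiv f t + vderiv g t = vderiv (\<lambda>t. f t + g t) t" if "t \<in> I" for t
  proof -
    have "((\<lambda>t. f t + g t) has_vector_derivative vderiv f t + vderiv g t) (at t)"
      by (rule has_vector_derivative_add[OF vderiv_at vderiv_at]) (use Suc.prems that in auto)
    then show ?thesis by (rule vderiv_eq[symmetric])
  qed
  have h: "dk I n (\<lambda>t. vderiv f t + vderiv g t)" by (rule Suc.IH) (use Suc.prems in simp_all)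
  have h5: "dk I n (vderiv (\<lambda>t. f t + g t))"
    using dk_local[OF assms h, of "vderiv (\<lambda>t. f t + g t)"] v by blast
  show ?case using d h5 by (simp only: dk.simps)
qed

lemma lin_diff:
  fixes f :: "real \<Rightarrow> 'a::real_normed_vector" and L :: "'a \<Rightarrow> 'b::real_normed_vector"
  assumes "bounded_linear L" "f differentiable (at t)"
  shows "(\<lambda>t. L (f t)) differentiable (at t)"
  using bounded_linear.has_vector_derivative[OF assms(1) vderiv_at[OF assms(2)]]
  by (rule differentiableI_vector)

lemma dk_linear:
  assumes "open I" "bounded_linear L"
  shows "dk I n f \<Longrightarrow> dk I n (\<lambda>t. L (f t))"
proof (induction n arbitrary: f)
  case 0 then show ?case using lin_diff[OF assms(2)] by simp
next
  case (Suc n)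
  have d: "\<forall>t\<in>I. (\<lambda>t. L (f t)) differentiable (at t)" using Suc.prems lin_diff[OF assms(2)] by simp
  have v: "L (vderiv f t) = vderiv (\<lambda>t. L (f t)) t" if "t \<in> I" for t
  proof -
    have "((\<lambda>t. L (f t)) has_vector_derivative L (vderiv f t)) (at t)"
      by (rule bounded_linear.has_vector_derivative[OF assms(2) vderiv_at]) (use Suc.prems that in auto)
    then show ?thesis by (rule vderiv_eq[symmetric])
  qed
  have h: "dk I n (\<lambda>t. L (vderiv f t))" by (rule Suc.IH) (use Suc.prems in simp_all)
  have h5: "dk I n (vderiv (\<lambda>t. L (f t)))"
    using dk_local[OF assms(1) h, of "vderiv (\<lambda>t. L (f t))"] v by blast
  show ?case using d h5 by (simp only: dk.simps)
qed

lemma bil_diff: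
  fixes f :: "real \<Rightarrow> 'a::real_normed_vector" and g :: "real \<Rightarrow> 'b::real_normed_vector"
  assumes "bounded_bilinear (P :: 'a \<Rightarrow> 'b \<Rightarrow> 'c::real_normed_vector)" "f differentiable (at t)" "g differentiable (at t)"
  shows "(\<lambda>t. P (f t) (g t)) differentiable (at t)"
  using bounded_bilinear.has_vector_derivative[OF assms(1) vderiv_at[OF assms(2)] vderiv_at[OF assms(3)]]
  by (rule differentiableI_vector)

lemma dk_bilinear:
  assumes "open I" "bounded_bilinear P"
  shows "dk I n f \<Longrightarrow> dk I n g \<Longrightarrow> dk I n (\<lambda>t. P (f t) (g t))"
proof (induction n arbitrary: f g)
  case 0 then show ?case using bil_diff[OF assms(2)] by simp
next
  case (Suc n)
  have d: "\<forall>t\<in>I. (\<lambda>t. P (f t) (g t)) differentiable (at t)"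
    using Suc.prems bil_diff[OF assms(2)] by simp
  have v: "P (f t) (vderiv g t) + P (vderiv f t) (g t) = vderiv (\<lambda>t. P (f t) (g t)) t" if "t \<in> I" for t
  proof -
    have "((\<lambda>t. P (f t) (g t)) has_vector_derivative P (f t) (vderiv g t) + P (vderiv f t) (g t)) (at t)"
      by (rule bounded_bilinear.has_vector_derivative[OF assms(2) vderiv_at vderiv_at]) (use Suc.prems that in auto)
    then show ?thesis by (rule vderiv_eq[symmetric])
  qed
  have h1: "dk I n (\<lambda>t. P (f t) (vderiv g t))" by (rule Suc.IH) (use Suc.prems dk_mono in auto)
  have h2: "dk I n (\<lambda>t. P (vderiv f t) (g t))" by (rule Suc.IH) (use Suc.prems dk_mono in auto)
  have h: "dk I n (\<lambda>t. P (f t) (vderiv g t) + P (vderiv f t) (g t))"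
    by (rule dk_add[OF assms(1) h1 h2])
  have h5: "dk I n (vderiv (\<lambda>t. P (f t) (g t)))"
    using dk_local[OF assms(1) h, of "vderiv (\<lambda>t. P (f t) (g t))"] v by blast
  show ?case using d h5 by (simp only: dk.simps)
qed

lemma powr_deriv_aux:
  assumes "f differentiable (at t)" "f t > (0::real)"
  shows "((\<lambda>t. f t powr a) has_real_derivative (a * (f t powr (a - 1) * vderiv f t))) (at t)"
proof -
  have fd: "(f has_real_derivative vderiv f t) (at t)"
    using vderiv_at[OF assms(1)] has_real_derivative_iff_has_vector_derivative by blast
  have "((\<lambda>t. f t powr a) has_real_derivative a * f t powr (a - of_nat 1) * vderiv f t) (at t)"
    by (rule DERIV_fun_powr[OF fd assms(2)])
  then show ?thesis by (simp add: mult.assoc)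
qed

lemma dk_powr:
  assumes "open I"
  shows "dk I n f \<Longrightarrow> \<forall>t\<in>I. f t > (0::real) \<Longrightarrow> dk I n (\<lambda>t. f t powr a)"
proof (induction n arbitrary: a)
  case 0
  have "(\<lambda>t. f t powr a) differentiable (at t)" if "t \<in> I" for t
  proof -
    have "f differentiable (at t)" using 0 that by simp
    then have "((\<lambda>t. f t powr a) has_real_derivative (a * (f t powr (a - 1) * vderiv f t))) (at t)"
      using powr_deriv_aux[of f t a] 0 that by blast
    then show ?thesis using has_field_derivative_imp_has_derivative differentiableI by blast
  qed
  then show ?case by simp
next
  case (Suc n)
  have pd: "((\<lambda>t. f t powr a) has_real_derivative (a * (f t powr (a - 1) * vderiv f t))) (at t)"
    if "t \<in> I" for t
    using powr_deriv_aux[of f t a] Suc.prems that dk_diff by blast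
  have d: "\<forall>t\<in>I. (\<lambda>t. f t powr a) differentiable (at t)"
    using has_field_derivative_imp_has_derivative[OF pd] differentiableI by blast
  have v: "a * (f t powr (a - 1) * vderiv f t) = vderiv (\<lambda>t. f t powr a) t" if "t \<in> I" for t
    using vector_derivative_at[OF pd[OF that, unfolded has_real_derivative_iff_has_vector_derivative]]
    unfolding vderiv_def by simp
  have h1: "dk I n (\<lambda>t. f t powr (a - 1))"
    by (rule Suc.IH) (use Suc.prems dk_mono in auto)
  have h2: "dk I n (vderiv f)" using Suc.prems(1) by simp
  have h3: "dk I n (\<lambda>t. f t powr (a - 1) * vderiv f t)"
    by (rule dk_bilinear[OF assms bounded_bilinear_mult h1 h2])
  have h4: "dk I n (\<lambda>t. a * (f t powr (a - 1) * vderiv f t))"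
    by (rule dk_bilinear[OF assms bounded_bilinear_mult dk_const h3])
  have h5: "dk I n (vderiv (\<lambda>t. f t powr a))"
    using dk_local[OF assms h4, of "vderiv (\<lambda>t. f t powr a)"] v by blast
  show ?case using d h5 by (simp only: dk.simps)
qed

lemma smooth_const: "smooth_on I (\<lambda>_. c)"
  unfolding smooth_dk using dk_const by blast

lemma smooth_add: "open I \<Longrightarrow> smooth_on I f \<Longrightarrow> smooth_on I g \<Longrightarrow> smooth_on I (\<lambda>t. f t + g t)"
  unfolding smooth_dk using dk_add by blast

lemma smooth_linear: "open I \<Longrightarrow> bounded_linear L \<Longrightarrow> smooth_on I f \<Longrightarrow> smooth_on I (\<lambda>t. L (f t))"
  unfolding smooth_dk using dk_linear by blast

lemma smooth_bilinear: "open I \<Longrightarrow> bounded_bilinear P \<Longrightarrow> smooth_on I f \<Longrightarrow> smooth_on I g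
   \<Longrightarrow> smooth_on I (\<lambda>t. P (f t) (g t))"
  unfolding smooth_dk using dk_bilinear by blast

lemma smooth_powr: "open I \<Longrightarrow> smooth_on I f \<Longrightarrow> \<forall>t\<in>I. f t > (0::real) \<Longrightarrow> smooth_on I (\<lambda>t. f t powr a)"
  unfolding smooth_dk using dk_powr by blast

lemma smooth_nth: "open I \<Longrightarrow> smooth_on I f \<Longrightarrow> smooth_on I (\<lambda>t. f t $ i)"
  by (rule smooth_linear[OF _ bounded_linear_vec_nth])

lemma smooth_diff_at: "smooth_on I f \<Longrightarrow> t \<in> I \<Longrightarrow> f differentiable (at t)"
  by (meson dk_diff smooth_dk)

lemma vector_4 [simp]:
 "(vector [a,b,c,d] ::('a::zero)^4)$1 = a"
 "(vector [a,b,c,d] ::('a::zero)^4)$2 = b"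
 "(vector [a,b,c,d] ::('a::zero)^4)$3 = c"
 "(vector [a,b,c,d] ::('a::zero)^4)$4 = d"
  unfolding vector_def by simp_all

lemma matrix_add_rdistrib_x: "((B + C) ** A) = (B ** A) + (C ** A)"
  by (vector matrix_matrix_mult_def sum.distrib[symmetric] field_simps)

lemma bb_mm: "bounded_bilinear ((**) :: real^'n^'m \<Rightarrow> real^'p^'n \<Rightarrow> real^'p^'m)"
  unfolding bilinear_conv_bounded_bilinear[symmetric] bilinear_def
  by (auto simp: linear_iff matrix_add_ldistrib matrix_add_rdistrib_x matrix_scalar_ac scalar_matrix_assoc)

definition Gu :: "real \<Rightarrow> real \<Rightarrow> real^4^4" where
  "Gu a b = vector [vector [1, 0, 0, 0], vector [0, a, 0, b],
                    vector [0, 0, 1, 0], vector [0, - b, 0, a]]"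
definition K0 :: "real^4^4" where
  "K0 = vector [vector [1, 0, 0, 0], vector [0, 0, 0, 0], vector [0, 0, 1, 0], vector [0, 0, 0, 0]]"
definition K1 :: "real^4^4" where
  "K1 = vector [vector [0, 0, 0, 0], vector [0, 1, 0, 0], vector [0, 0, 0, 0], vector [0, 0, 0, 1]]"
definition K2 :: "real^4^4" where
  "K2 = vector [vector [0, 0, 0, 0], vector [0, 0, 0, 1], vector [0, 0, 0, 0], vector [0, -1, 0, 0]]"

lemma Gu_decomp: "Gu a b = K0 + a *\<^sub>R K1 + b *\<^sub>R K2"
  by (simp add: vec_eq_iff forall_4 Gu_def K0_def K1_def K2_def)

lemma G_mat_Gu: "G_mat 1 1 th = Gu (cos th) (sin th)"
  by (simp add: G_mat_def Gu_def)

lemma Gu_orth: assumes "a\<^sup>2 + b\<^sup>2 = 1" shows "orthogonal_matrix (Gu a b)"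
  using assms unfolding orthogonal_matrix_def
  by (simp add: vec_eq_iff forall_4 Gu_def matrix_matrix_mult_def sum_4 transpose_def mat_def
      power2_eq_square algebra_simps)

lemma Gu_row1: "(Gu a b ** M) $ 1 = M $ 1"
  by (simp add: vec_eq_iff forall_4 Gu_def matrix_matrix_mult_def sum_4)

lemma Gu_key:
  assumes "a\<^sup>2 + b\<^sup>2 = 1"
  shows "Gu a b ** bishop_mat (r*a) b2 (r*b) + ((-(w*b)) *\<^sub>R K1 + (w*a) *\<^sub>R K2) = C_mat r b2 w ** Gu a b"
proof -
  have h: "(a*a+b*b)*r = r" using assms by (simp add: power2_eq_square)
  have h2: "r = a*(a*r) + b*(b*r)" using h by (simp add: algebra_simps)
  show ?thesis using h2
  by (simp add: vec_eq_iff forall_4 Gu_def K1_def K2_def bishop_mat_def C_mat_def matrix_matrix_mult_def sum_4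
      power2_eq_square algebra_simps)
qed

lemma antideriv:
  fixes f :: "real \<Rightarrow> real"
  assumes "open I" "is_interval I" "continuous_on I f" "t0 \<in> I"
  shows "\<exists>F. \<forall>t\<in>I. (F has_real_derivative f t) (at t)"
proof -
  define F where "F t = integral {t0..t} f - integral {t..t0} f" for t
  have "(F has_real_derivative f t) (at t)" if t: "t \<in> I" for t
  proof -
    obtain e1 where e1: "e1 > 0" "ball t e1 \<subseteq> I" using assms(1) t open_contains_ball by blast
    obtain e2 where e2: "e2 > 0" "ball t0 e2 \<subseteq> I" using assms(1,4) open_contains_ball by blast
    define d where "d = min e1 e2 / 2"
    have d: "d > 0" "d < e1" "d < e2" using e1 e2 by (auto simp: d_def)
    define a where "a = min t t0 - d"
    define b where "b = max t t0 + d"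
    have "t - d \<in> I" "t + d \<in> I" "t0 - d \<in> I" "t0 + d \<in> I"
      using d e1 e2 by (auto simp: subset_iff dist_real_def)
    then have aI: "a \<in> I" and bI: "b \<in> I" by (auto simp: a_def b_def min_def max_def)
    have abI: "{a..b} \<subseteq> I" unfolding subset_iff atLeastAtMost_iff using aI bI assms(2)[unfolded is_interval_1] by blast
    have cab: "continuous_on {a..b} f" using continuous_on_subset[OF assms(3) abI] .
    have tab: "t \<in> {a<..<b}" "t0 \<in> {a<..<b}" using d by (auto simp: a_def b_def)
    have int: "f integrable_on {a..s}" if "s \<le> b" for s
      using continuous_on_subset[OF cab] that by (intro integrable_continuous_real) auto
    have eq: "F s = integral {a..s} f - integral {a..t0} f" if s: "s \<in> {a<..<b}" for s
    proof (cases "t0 \<le> s")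
      case True
      have "integral {a..t0} f + integral {t0..s} f = integral {a..s} f"
        using tab s True by (intro Henstock_Kurzweil_Integration.integral_combine int) auto
      moreover have "integral {s..t0} f = 0" using True
        by (metis box_real(2) content_real_eq_0 integral_null)
      ultimately show ?thesis by (simp add: F_def)
    next
      case False
      have "integral {a..s} f + integral {s..t0} f = integral {a..t0} f"
        using tab s False by (intro Henstock_Kurzweil_Integration.integral_combine int) auto
      moreover have "integral {t0..s} f = 0" using False
        by (metis box_real(2) content_real_eq_0 integral_null less_eq_real_def not_le)
      ultimately show ?thesis by (simp add: F_def)
    qed
    have "((\<lambda>s. integral {a..s} f) has_real_derivative f t) (at t within {a..b})"
      using cab tab by (intro integral_has_real_derivative) auto
    then have "((\<lambda>s. integral {a..s} f) has_real_derivative f t) (at t within {a<..<b})"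
      by (rule DERIV_subset) auto
    then have "((\<lambda>s. integral {a..s} f) has_real_derivative f t) (at t)"
      using tab at_within_open[of t "{a<..<b}"] by simp
    then have "((\<lambda>s. integral {a..s} f - integral {a..t0} f) has_real_derivative f t) (at t)"
      using DERIV_diff[OF _ DERIV_const] by fastforce
    then show ?thesis
      by (rule has_field_derivative_transform_within_open[where S="{a<..<b}"]) (use tab eq in auto)
  qed
  then show ?thesis by blast
qed

lemma alg1:
  fixes q F G f' g' :: real
  assumes q: "q > 0" "q * q = F\<^sup>2 + G\<^sup>2"
  shows "(f' * q - F * ((2 * F * f' + 2 * G * g') / (2 * q))) / (q * q)
       = - ((g' * F - G * f') / (F\<^sup>2 + G\<^sup>2)) * (G / q)"
    and "(g' * q - G * ((2 * F * f' + 2 * G * g') / (2 * q))) / (q * q)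
       = ((g' * F - G * f') / (F\<^sup>2 + G\<^sup>2)) * (F / q)"
proof -
  have h1: "f' * q - F * ((2 * F * f' + 2 * G * g') / (2 * q)) = (f' * (q * q) - F * (F * f' + G * g')) / q"
    using q by (simp add: field_simps)
  have h2: "f' * (q * q) - F * (F * f' + G * g') = G * (G * f' - F * g')"
    unfolding q(2) by (simp add: power2_eq_square algebra_simps)
  show "(f' * q - F * ((2 * F * f' + 2 * G * g') / (2 * q))) / (q * q)
       = - ((g' * F - G * f') / (F\<^sup>2 + G\<^sup>2)) * (G / q)"
    unfolding h1 h2 q(2)[symmetric] using q(1) by (simp add: field_simps)
  have h1: "g' * q - G * ((2 * F * f' + 2 * G * g') / (2 * q)) = (g' * (q * q) - G * (F * f' + G * g')) / q"
    using q by (simp add: field_simps)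
  have h2: "g' * (q * q) - G * (F * f' + G * g') = F * (g' * F - G * f')"
    unfolding q(2) by (simp add: power2_eq_square algebra_simps)
  show "(g' * q - G * ((2 * F * f' + 2 * G * g') / (2 * q))) / (q * q)
       = ((g' * F - G * f') / (F\<^sup>2 + G\<^sup>2)) * (F / q)"
    unfolding h1 h2 q(2)[symmetric] using q(1) by (simp add: field_simps)
qed

lemma uv_deriv:
  fixes f g :: "real \<Rightarrow> real"
  assumes f: "(f has_real_derivative f') (at t)" and g: "(g has_real_derivative g') (at t)"
    and pos: "(f t)\<^sup>2 + (g t)\<^sup>2 > 0"
  shows "((\<lambda>t. f t / sqrt ((f t)\<^sup>2 + (g t)\<^sup>2)) has_real_derivative
           - ((g' * f t - g t * f') / ((f t)\<^sup>2 + (g t)\<^sup>2)) * (g t / sqrt ((f t)\<^sup>2 + (g t)\<^sup>2))) (at t)"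
    and "((\<lambda>t. g t / sqrt ((f t)\<^sup>2 + (g t)\<^sup>2)) has_real_derivative
           ((g' * f t - g t * f') / ((f t)\<^sup>2 + (g t)\<^sup>2)) * (f t / sqrt ((f t)\<^sup>2 + (g t)\<^sup>2))) (at t)"
proof -
  have sq: "sqrt ((f t)\<^sup>2 + (g t)\<^sup>2) * sqrt ((f t)\<^sup>2 + (g t)\<^sup>2) = (f t)\<^sup>2 + (g t)\<^sup>2"
    using pos by simp
  have sp: "sqrt ((f t)\<^sup>2 + (g t)\<^sup>2) > 0" using pos by simp
  have ne: "sqrt ((f t)\<^sup>2 + (g t)\<^sup>2) \<noteq> 0" using sp by linarith
  have dS: "((\<lambda>t. sqrt ((f t)\<^sup>2 + (g t)\<^sup>2)) has_real_derivative
        (2 * f t * f' + 2 * g t * g') / (2 * sqrt ((f t)\<^sup>2 + (g t)\<^sup>2))) (at t)"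
    using pos
    by (auto intro!: derivative_eq_intros f g simp: power2_eq_square field_simps)
  show "((\<lambda>t. f t / sqrt ((f t)\<^sup>2 + (g t)\<^sup>2)) has_real_derivative
           - ((g' * f t - g t * f') / ((f t)\<^sup>2 + (g t)\<^sup>2)) * (g t / sqrt ((f t)\<^sup>2 + (g t)\<^sup>2))) (at t)"
    using DERIV_divide[OF f dS ne] unfolding alg1(1)[OF sp sq] .
  show "((\<lambda>t. g t / sqrt ((f t)\<^sup>2 + (g t)\<^sup>2)) has_real_derivative
           ((g' * f t - g t * f') / ((f t)\<^sup>2 + (g t)\<^sup>2)) * (f t / sqrt ((f t)\<^sup>2 + (g t)\<^sup>2))) (at t)"
    using DERIV_divide[OF g dS ne] unfolding alg1(2)[OF sp sq] .
qed

theorem lemma2: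
  fixes I :: "real set" and \<gamma> :: "real \<Rightarrow> real^4" and B :: "real \<Rightarrow> real^4^4"
    and b1 b2 b3 :: "real \<Rightarrow> real"
  assumes "open I" and "is_interval I" and "I \<noteq> {}"
    and "arclength_curve I \<gamma>"
    and "frame_on I \<gamma> B"
    and "coeff_matrix I B (\<lambda>t. bishop_mat (b1 t) (b2 t) (b3 t))"
    and "\<forall>t\<in>I. b1 t \<noteq> 0 \<or> b3 t \<noteq> 0"
  shows "\<exists>C c1 c2 c3 \<theta> s1 s2 s3 s4 s5.
     frame_on I \<gamma> C \<and>
     coeff_matrix I C (\<lambda>t. C_mat (c1 t) (c2 t) (c3 t)) \<and>
     {s1, s2, s3, s4, s5} \<subseteq> {-1, 1::real} \<and>
     (\<forall>t\<in>I.
        c1 t = s1 * sqrt ((b1 t)\<^sup>2 + (b3 t)\<^sup>2) \<and>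
        c2 t = b2 t \<and>
        c3 t = s2 * ((deriv b3 t * b1 t - b3 t * deriv b1 t) / ((b1 t)\<^sup>2 + (b3 t)\<^sup>2)) \<and>
        C t ** matrix_inv (B t) = G_mat s3 s4 (\<theta> t) \<and>
        (\<theta> has_real_derivative
            s5 * ((deriv b3 t * b1 t - b3 t * deriv b1 t) / ((b1 t)\<^sup>2 + (b3 t)\<^sup>2))) (at t))"
proof -
  have opI: "open I" using assms(1) .
  have smB: "smooth_on I B" and orthB: "\<And>t. t \<in> I \<Longrightarrow> orthogonal_matrix (B t)"
    and row1: "\<And>t. t \<in> I \<Longrightarrow> B t $ 1 = vector_derivative \<gamma> (at t)"
    using assms(5) unfolding frame_on_def by auto
  have Bd: "\<And>t. t \<in> I \<Longrightarrow> (B has_vector_derivative (bishop_mat (b1 t) (b2 t) (b3 t) ** B t)) (at t)"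
    using assms(6) unfolding coeff_matrix_def by auto
  define \<beta> where "\<beta> = (\<lambda>t. vderiv B t ** transpose (B t))"
  have lin_tr: "bounded_linear (transpose :: real^4^4 \<Rightarrow> real^4^4)"
    unfolding linear_conv_bounded_linear[symmetric] by (auto simp: linear_iff vec_eq_iff transpose_def)
  have sm\<beta>: "smooth_on I \<beta>" unfolding \<beta>_def
    by (rule smooth_bilinear[OF opI bb_mm smooth_vderiv[OF smB] smooth_linear[OF opI lin_tr smB]])
  have \<beta>X: "\<beta> t = bishop_mat (b1 t) (b2 t) (b3 t)" if "t \<in> I" for t
  proof -
    have "vderiv B t = bishop_mat (b1 t) (b2 t) (b3 t) ** B t"
      unfolding vderiv_def using Bd[OF that] by (rule vector_derivative_at)
    moreover have "B t ** transpose (B t) = mat 1" using orthB[OF that] unfolding orthogonal_matrix_def by auto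
    ultimately show ?thesis unfolding \<beta>_def by (simp add: matrix_mul_assoc[symmetric])
  qed
  have "smooth_on I (\<lambda>t. \<beta> t $ 1 $ 2)" by (intro smooth_nth opI sm\<beta>)
  then have smb1: "smooth_on I b1"
    by (rule smooth_local[OF opI]) (simp add: \<beta>X bishop_mat_def)
  have "smooth_on I (\<lambda>t. \<beta> t $ 1 $ 4)" by (intro smooth_nth opI sm\<beta>)
  then have smb3: "smooth_on I b3"
    by (rule smooth_local[OF opI]) (simp add: \<beta>X bishop_mat_def)
  define s where "s = (\<lambda>t. (b1 t)\<^sup>2 + (b3 t)\<^sup>2)"
  have spos: "\<And>t. t \<in> I \<Longrightarrow> s t > 0" using assms(7) by (simp add: s_def sum_power2_gt_zero_iff)
  have sms: "smooth_on I s"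
  proof -
    have "s = (\<lambda>t. b1 t * b1 t + b3 t * b3 t)" by (simp add: s_def power2_eq_square)
    moreover have "smooth_on I (\<lambda>t. b1 t * b1 t + b3 t * b3 t)"
      by (intro smooth_add opI smooth_bilinear[OF opI bounded_bilinear_mult] smb1 smb3)
    ultimately show ?thesis by simp
  qed
  define u where "u = (\<lambda>t. b1 t / sqrt (s t))"
  define v where "v = (\<lambda>t. b3 t / sqrt (s t))"
  have spw: "s t powr (-(1/2)) = 1 / sqrt (s t)" if "t \<in> I" for t
  proof -
    have "s t powr (1/2) = sqrt (s t)" by (rule powr_half_sqrt) (use spos[OF that] in simp)
    moreover have "s t powr (-(1/2)) = inverse (s t powr (1/2))" by (rule powr_minus)
    ultimately show ?thesis by (simp add: inverse_eq_divide)
  qed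
  have smp: "smooth_on I (\<lambda>t. s t powr (-(1/2)))"
    using smooth_powr[OF opI sms] spos by blast
  have smu: "smooth_on I u"
  proof (rule smooth_local[OF opI])
    show "smooth_on I (\<lambda>t. b1 t * s t powr (-(1/2)))"
      using smooth_bilinear[OF opI bounded_bilinear_mult smb1 smp] by simp
    show "b1 t * s t powr (-(1/2)) = u t" if "t \<in> I" for t
      using spw[OF that] by (simp add: u_def)
  qed
  have smv: "smooth_on I v"
  proof (rule smooth_local[OF opI])
    show "smooth_on I (\<lambda>t. b3 t * s t powr (-(1/2)))"
      using smooth_bilinear[OF opI bounded_bilinear_mult smb3 smp] by simp
    show "b3 t * s t powr (-(1/2)) = v t" if "t \<in> I" for t
      using spw[OF that] by (simp add: v_def)
  qed
  have uv1: "(u t)\<^sup>2 + (v t)\<^sup>2 = 1" if "t \<in> I" for t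
  proof -
    have "(u t)\<^sup>2 + (v t)\<^sup>2 = ((b1 t)\<^sup>2 + (b3 t)\<^sup>2) / s t"
      using spos[OF that] by (simp add: u_def v_def power_divide add_divide_distrib)
    then show ?thesis using spos[OF that] by (simp add: s_def sum_power2_gt_zero_iff)
  qed
  define \<omega> where "\<omega> = (\<lambda>t. (deriv b3 t * b1 t - b3 t * deriv b1 t) / ((b1 t)\<^sup>2 + (b3 t)\<^sup>2))"
  have db1: "(b1 has_real_derivative deriv b1 t) (at t)" if "t \<in> I" for t
    using smooth_diff_at[OF smb1 that] DERIV_deriv_iff_real_differentiable by blast
  have db3: "(b3 has_real_derivative deriv b3 t) (at t)" if "t \<in> I" for t
    using smooth_diff_at[OF smb3 that] DERIV_deriv_iff_real_differentiable by blast
  have du: "(u has_real_derivative (- (\<omega> t) * v t)) (at t)" if "t \<in> I" for t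
    unfolding u_def v_def s_def \<omega>_def
    by (rule uv_deriv(1)[OF db1[OF that] db3[OF that]]) (use spos[OF that] in \<open>simp add: s_def\<close>)
  have dv: "(v has_real_derivative (\<omega> t * u t)) (at t)" if "t \<in> I" for t
    unfolding u_def v_def s_def \<omega>_def
    by (rule uv_deriv(2)[OF db1[OF that] db3[OF that]]) (use spos[OF that] in \<open>simp add: s_def\<close>)
  define Gm where "Gm = (\<lambda>t. K0 + u t *\<^sub>R K1 + v t *\<^sub>R K2)"
  define C where "C = (\<lambda>t. Gm t ** B t)"
  have CGu: "C t = Gu (u t) (v t) ** B t" for t by (simp add: C_def Gm_def Gu_decomp)
  have smG: "smooth_on I Gm"
  proof -
    have h1: "smooth_on I (\<lambda>t. u t *\<^sub>R K1)"
      using smooth_bilinear[OF opI bounded_bilinear_scaleR smu smooth_const[of I K1]] by simp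
    have h2: "smooth_on I (\<lambda>t. v t *\<^sub>R K2)"
      using smooth_bilinear[OF opI bounded_bilinear_scaleR smv smooth_const[of I K2]] by simp
    show ?thesis unfolding Gm_def
      by (intro smooth_add[OF opI] smooth_const h1 h2)
  qed
  have smC: "smooth_on I C" unfolding C_def
    by (rule smooth_bilinear[OF opI bb_mm smG smB])
  have dG: "(Gm has_vector_derivative ((- (\<omega> t) * v t) *\<^sub>R K1 + (\<omega> t * u t) *\<^sub>R K2)) (at t)"
    if "t \<in> I" for t
  proof -
    have "((\<lambda>t. K0 + u t *\<^sub>R K1 + v t *\<^sub>R K2) has_vector_derivative
      (0 + (u t *\<^sub>R 0 + (- (\<omega> t) * v t) *\<^sub>R K1)) + (v t *\<^sub>R 0 + (\<omega> t * u t) *\<^sub>R K2)) (at t)"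
      by (intro has_vector_derivative_add has_vector_derivative_const has_vector_derivative_scaleR
          du[OF that] dv[OF that])
    then show ?thesis unfolding Gm_def by simp
  qed
  have b1uv: "b1 t = sqrt (s t) * u t" and b3uv: "b3 t = sqrt (s t) * v t" if "t \<in> I" for t
    using spos[OF that] by (simp_all add: u_def v_def)
  have frame: "frame_on I \<gamma> C"
    unfolding frame_on_def
  proof (intro conjI ballI smC)
    fix t assume t: "t \<in> I"
    show "orthogonal_matrix (C t)" unfolding CGu
      by (rule orthogonal_matrix_mul[OF Gu_orth[OF uv1[OF t]] orthB[OF t]])
    show "C t $ 1 = vector_derivative \<gamma> (at t)" unfolding CGu Gu_row1 using row1[OF t] .
  qed
  have coeff: "coeff_matrix I C (\<lambda>t. C_mat (sqrt (s t)) (b2 t) (\<omega> t))"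
    unfolding coeff_matrix_def
  proof
    fix t assume t: "t \<in> I"
    have "(C has_vector_derivative
        (Gm t ** (bishop_mat (b1 t) (b2 t) (b3 t) ** B t) +
         ((- (\<omega> t) * v t) *\<^sub>R K1 + (\<omega> t * u t) *\<^sub>R K2) ** B t)) (at t)"
      unfolding C_def by (rule bounded_bilinear.has_vector_derivative[OF bb_mm dG[OF t] Bd[OF t]])
    moreover have "Gm t ** (bishop_mat (b1 t) (b2 t) (b3 t) ** B t) +
         ((- (\<omega> t) * v t) *\<^sub>R K1 + (\<omega> t * u t) *\<^sub>R K2) ** B t
       = C_mat (sqrt (s t)) (b2 t) (\<omega> t) ** C t"
    proof -
      have "Gu (u t) (v t) ** bishop_mat (sqrt (s t) * u t) (b2 t) (sqrt (s t) * v t)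
            + ((- (\<omega> t * v t)) *\<^sub>R K1 + (\<omega> t * u t) *\<^sub>R K2)
            = C_mat (sqrt (s t)) (b2 t) (\<omega> t) ** Gu (u t) (v t)"
        by (rule Gu_key[OF uv1[OF t]])
      then have "Gm t ** bishop_mat (b1 t) (b2 t) (b3 t)
            + ((- (\<omega> t) * v t) *\<^sub>R K1 + (\<omega> t * u t) *\<^sub>R K2)
            = C_mat (sqrt (s t)) (b2 t) (\<omega> t) ** Gm t"
        using b1uv[OF t] b3uv[OF t] by (simp add: Gm_def Gu_decomp)
      then have "(Gm t ** bishop_mat (b1 t) (b2 t) (b3 t)
            + ((- (\<omega> t) * v t) *\<^sub>R K1 + (\<omega> t * u t) *\<^sub>R K2)) ** B t
            = (C_mat (sqrt (s t)) (b2 t) (\<omega> t) ** Gm t) ** B t" by simp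
      then show ?thesis
        by (simp add: C_def matrix_add_rdistrib_x matrix_mul_assoc)
    qed
    ultimately show "(C has_vector_derivative C_mat (sqrt (s t)) (b2 t) (\<omega> t) ** C t) (at t)"
      by simp
  qed
  have contd: "continuous_on I (vderiv f)" if "smooth_on I f" for f :: "real \<Rightarrow> real"
  proof -
    have "smooth_on I (vderiv f)" using smooth_vderiv[OF that] .
    then show ?thesis
      by (intro continuous_at_imp_continuous_on ballI differentiable_imp_continuous_within smooth_diff_at)
  qed
  have dvd: "deriv f t = vderiv f t" if "smooth_on I f" "t \<in> I" for f :: "real \<Rightarrow> real" and t
  proof -
    have "(f has_real_derivative deriv f t) (at t)"
      using smooth_diff_at[OF that] DERIV_deriv_iff_real_differentiable by blast
    then show ?thesis unfolding vderiv_def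
      by (simp add: has_real_derivative_iff_has_vector_derivative vector_derivative_at)
  qed
  have cont_b: "continuous_on I b1" "continuous_on I b3"
    using smooth_diff_at[OF smb1] smooth_diff_at[OF smb3]
    by (auto intro!: continuous_at_imp_continuous_on differentiable_imp_continuous_within)
  have cont\<omega>: "continuous_on I \<omega>"
  proof -
    have "continuous_on I (\<lambda>t. (vderiv b3 t * b1 t - b3 t * vderiv b1 t) / ((b1 t)\<^sup>2 + (b3 t)\<^sup>2))"
      using contd[OF smb1] contd[OF smb3] cont_b assms(7)
      by (intro continuous_intros) (auto simp: sum_power2_eq_zero_iff)
    then show ?thesis
      by (rule continuous_on_eq) (simp add: \<omega>_def dvd[OF smb1] dvd[OF smb3])
  qed
  obtain t0 where t0: "t0 \<in> I" using assms(3) by blast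
  obtain F where F: "\<And>t. t \<in> I \<Longrightarrow> (F has_real_derivative \<omega> t) (at t)"
    using antideriv[OF opI assms(2) cont\<omega> t0] by blast
  obtain \<phi> where \<phi>: "u t0 = cos \<phi>" "v t0 = sin \<phi>"
    using sincos_total_2pi[OF uv1[OF t0]] by metis
  define \<theta> where "\<theta> = (\<lambda>t. \<phi> - F t0 + F t)"
  have d\<theta>: "(\<theta> has_real_derivative \<omega> t) (at t)" if "t \<in> I" for t
    unfolding \<theta>_def using DERIV_add[OF DERIV_const F[OF that]] by simp
  define h where "h = (\<lambda>t. u t * cos (\<theta> t) + v t * sin (\<theta> t))"
  have dh: "(h has_real_derivative 0) (at t within I)" if "t \<in> I" for t
  proof -
    have "(h has_real_derivative
       ((- (\<omega> t) * v t) * cos (\<theta> t) + (- sin (\<theta> t) * \<omega> t) * u t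
        + ((\<omega> t * u t) * sin (\<theta> t) + (cos (\<theta> t) * \<omega> t) * v t))) (at t)"
      unfolding h_def
      by (rule DERIV_add[OF DERIV_mult[OF du[OF that] DERIV_fun_cos[OF d\<theta>[OF that]]]
                            DERIV_mult[OF dv[OF that] DERIV_fun_sin[OF d\<theta>[OF that]]]])
    then have "(h has_real_derivative 0) (at t)"
      by (rule DERIV_cong) (simp add: algebra_simps)
    then show ?thesis by (rule has_field_derivative_at_within)
  qed
  have hc: "\<And>t. t \<in> I \<Longrightarrow> h t = 1"
  proof -
    obtain c where c: "\<forall>x\<in>I. h x = c"
      using has_field_derivative_zero_constant[OF is_interval_convex[OF assms(2)] dh] by blast
    have "h t0 = 1" unfolding h_def \<theta>_def using \<phi> uv1[OF t0]
      by (simp add: power2_eq_square)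
    then show "\<And>t. t \<in> I \<Longrightarrow> h t = 1" using c t0 by auto
  qed
  have ucos: "u t = cos (\<theta> t)" and vsin: "v t = sin (\<theta> t)" if "t \<in> I" for t
  proof -
    have "(u t - cos (\<theta> t))\<^sup>2 + (v t - sin (\<theta> t))\<^sup>2
        = ((u t)\<^sup>2 + (v t)\<^sup>2) + ((sin (\<theta> t))\<^sup>2 + (cos (\<theta> t))\<^sup>2) - 2 * h t"
      unfolding h_def by (simp add: power2_eq_square algebra_simps)
    also have "\<dots> = 0" using uv1[OF that] hc[OF that] by simp
    finally show "u t = cos (\<theta> t)" "v t = sin (\<theta> t)" by (simp_all add: sum_power2_eq_zero_iff)
  qed
  have inv: "B t ** matrix_inv (B t) = mat 1" if "t \<in> I" for t
  proof -
    have "\<exists>A'. B t ** A' = mat 1 \<and> A' ** B t = mat 1"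
      using orthB[OF that] unfolding orthogonal_matrix_def by blast
    then show ?thesis unfolding matrix_inv_def by (metis (mono_tags, lifting) someI_ex)
  qed
  have final: "C t ** matrix_inv (B t) = G_mat 1 1 (\<theta> t)" if "t \<in> I" for t
    unfolding CGu G_mat_Gu using inv[OF that] ucos[OF that] vsin[OF that]
    by (simp add: matrix_mul_assoc[symmetric])
  show ?thesis
    apply (rule exI[where x=C], rule exI[where x="\<lambda>t. sqrt (s t)"], rule exI[where x=b2],
        rule exI[where x=\<omega>], rule exI[where x=\<theta>])
    apply (rule exI[where x=1])+
    using frame coeff final d\<theta> by (simp add: s_def \<omega>_def)
qed

end
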